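(* Let $\mathcal E$ be a nest on a complex Banach space $X$, let $\Phi$ be a support function on $\mathcal E$ and let $T\in\mathcal M(\Phi)$ be an operator of rank $n$. Then $T$ can be written as a sum of $n$ rank-one operators each lying in $\mathcal M(\Phi)$.
   Context: A nest $\mathcal E$ on $X$ is a family of closed linear subspaces of $X$, totally ordered by inclusion, containing $\{0\}$ and $X$, closed under arbitrary meets (intersections) and joins (norm-closed linear spans of unions). A support function on $\mathcal E$ is an inclusion-preserving map $\Phi:\mathcal E\to\mathcal E$. $\mathcal M(\Phi)=\{T\in\mathcal B(X): TE\subseteq\Phi(E)\ \forall E\in\mathcal E\}$. *)

theory Defs
  imports "HOL-Analysis.Analysis"
begin

text \<open>Isabelle/HOL has no library class of complex normed spaces, so we introduce one:
  a real normed vector space with a compatible complex scalar multiplication.\<close>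

class complex_normed_space = real_normed_vector +
  fixes scaleC :: "complex \<Rightarrow> 'a \<Rightarrow> 'a"
  assumes scaleC_add_right: "scaleC a (x + y) = scaleC a x + scaleC a y"
    and scaleC_add_left: "scaleC (a + b) x = scaleC a x + scaleC b x"
    and scaleC_scaleC: "scaleC a (scaleC b x) = scaleC (a * b) x"
    and scaleC_one: "scaleC 1 x = x"
    and scaleC_of_real: "scaleC (complex_of_real r) x = scaleR r x"
    and norm_scaleC: "norm (scaleC a x) = cmod a * norm x"

text \<open>Complex Banach space = complete complex normed space: use sort
  {complex_normed_space, banach}.\<close>

definition csubspace :: "'a::complex_normed_space set \<Rightarrow> bool" where
  "csubspace S \<longleftrightarrow> 0 \<in> S \<and> (\<forall>x\<in>S. \<forall>y\<in>S. x + y \<in> S) \<and> (\<forall>c. \<forall>x\<in>S. scaleC c x \<in> S)"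

definition closed_csubspace :: "'a::complex_normed_space set \<Rightarrow> bool" where
  "closed_csubspace S \<longleftrightarrow> csubspace S \<and> closed S"

definition cspan :: "'a::complex_normed_space set \<Rightarrow> 'a set" where
  "cspan A = module.span scaleC A"

definition cdependent :: "'a::complex_normed_space set \<Rightarrow> bool" where
  "cdependent A = module.dependent scaleC A"

definition join_sub :: "'a::complex_normed_space set set \<Rightarrow> 'a set" where
  "join_sub F = closure (cspan (\<Union>F))"

definition nest :: "'a::complex_normed_space set set \<Rightarrow> bool" where
  "nest \<E> \<longleftrightarrow>
     (\<forall>E\<in>\<E>. closed_csubspace E) \<and>
     (\<forall>E\<in>\<E>. \<forall>F\<in>\<E>. E \<subseteq> F \<or> F \<subseteq> E) \<and>
     {0} \<in> \<E> \<and> UNIV \<in> \<E> \<and>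
     (\<forall>F. F \<subseteq> \<E> \<longrightarrow> \<Inter>F \<in> \<E>) \<and>
     (\<forall>F. F \<subseteq> \<E> \<longrightarrow> join_sub F \<in> \<E>)"

definition support_function ::
  "'a::complex_normed_space set set \<Rightarrow> ('a set \<Rightarrow> 'a set) \<Rightarrow> bool" where
  "support_function \<E> \<Phi> \<longleftrightarrow>
     (\<forall>E\<in>\<E>. \<Phi> E \<in> \<E>) \<and> (\<forall>E\<in>\<E>. \<forall>F\<in>\<E>. E \<subseteq> F \<longrightarrow> \<Phi> E \<subseteq> \<Phi> F)"

definition bounded_clinear_op :: "('a::complex_normed_space \<Rightarrow> 'b::complex_normed_space) \<Rightarrow> bool" where
  "bounded_clinear_op T \<longleftrightarrow>
     (\<forall>x y. T (x + y) = T x + T y) \<and> (\<forall>c x. T (scaleC c x) = scaleC c (T x)) \<and>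
     (\<exists>K. \<forall>x. norm (T x) \<le> K * norm x)"

definition Mset :: "'a::complex_normed_space set set \<Rightarrow> ('a set \<Rightarrow> 'a set) \<Rightarrow> ('a \<Rightarrow> 'a) set" where
  "Mset \<E> \<Phi> = {T. bounded_clinear_op T \<and> (\<forall>E\<in>\<E>. T ` E \<subseteq> \<Phi> E)}"

definition has_rank :: "('a::complex_normed_space \<Rightarrow> 'b::complex_normed_space) \<Rightarrow> nat \<Rightarrow> bool" where
  "has_rank T n \<longleftrightarrow> (\<exists>B. finite B \<and> card B = n \<and> \<not> cdependent B \<and> cspan B = range T)"

end

theory Submission imports Defs begin

interpretation cv: vector_space "scaleC :: complex \<Rightarrow> 'a::complex_normed_space \<Rightarrow> 'a"
  by unfold_locales (simp_all add: scaleC_add_right scaleC_add_left scaleC_scaleC scaleC_one)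

lemma cspan_eq: "cspan A = cv.span A" by (simp add: cspan_def)
lemma cdep_eq: "cdependent A = cv.dependent A" by (simp add: cdependent_def)
lemma csubspace_eq: "csubspace S = cv.subspace S" by (simp add: csubspace_def cv.subspace_def)

lemma bl_scaleC_left: "bounded_linear (\<lambda>a::complex. scaleC a (b::'a::complex_normed_space))"
proof (rule bounded_linear_intro[where K="norm b"])
  fix x y :: complex show "scaleC (x+y) b = scaleC x b + scaleC y b" by (simp add: scaleC_add_left)
next
  fix r::real and x::complex
  have "scaleC (r *\<^sub>R x) b = scaleC (complex_of_real r * x) b"
    by (simp add: scaleR_conv_of_real)
  also have "\<dots> = scaleC (complex_of_real r) (scaleC x b)"
    by (rule scaleC_scaleC[symmetric])
  finally have "scaleC (r *\<^sub>R x) b = scaleC (complex_of_real r) (scaleC x b)" .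
  then show "scaleC (r *\<^sub>R x) b = r *\<^sub>R scaleC x b" by (simp only: scaleC_of_real)
next
  fix x::complex show "norm (scaleC x b) \<le> norm x * norm b" by (simp add: norm_scaleC)
qed

lemma key_ineq:
  fixes S :: "'a::complex_normed_space set"
  assumes "cv.subspace S" "s \<in> S"
  shows "cmod t * infdist b S \<le> norm (s + scaleC t b)"
proof (cases "t = 0")
  case True then show ?thesis by simp
next
  case False
  let ?s' = "scaleC (- 1/t) s"
  have s': "?s' \<in> S" using assms cv.subspace_scale by blast
  have "scaleC t (b - ?s') = scaleC t b - scaleC (t * (- 1/t)) s"
    by (simp only: cv.scale_right_diff_distrib scaleC_scaleC)
  also have "\<dots> = scaleC t b + s" using False by (simp add: cv.scale_minus_left)
  finally have "s + scaleC t b = scaleC t (b - ?s')" by (simp add: add.commute)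
  then have "norm (s + scaleC t b) = cmod t * dist b ?s'"
    by (simp add: norm_scaleC dist_norm)
  moreover have "infdist b S \<le> dist b ?s'" using s' by (rule infdist_le)
  ultimately show ?thesis by (simp add: mult_left_mono)
qed

lemma closed_span_insert:
  fixes C :: "'a::{complex_normed_space,banach} set"
  assumes cl: "closed (cv.span C)" and nb: "b \<notin> cv.span C"
  shows "closed (cv.span (insert b C))"
proof -
  let ?S = "cv.span C"
  define d where "d = infdist b ?S"
  have "0 \<in> ?S" by (rule cv.span_zero)
  then have dpos: "d > 0" unfolding d_def using infdist_pos_not_in_closed[OF cl] nb by auto
  have ineq: "cmod t * d \<le> norm (s + scaleC t b)" if "s \<in> ?S" for s t
    unfolding d_def by (rule key_ineq[OF cv.subspace_span that])
  show ?thesis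
  proof (rule closed_sequential_limits[THEN iffD2], intro allI impI, elim conjE)
    fix x l assume xin: "\<forall>n. x n \<in> cv.span (insert b C)" and xl: "x \<longlonglongrightarrow> l"
    have "\<forall>n. \<exists>k. x n - scaleC k b \<in> ?S" using xin cv.span_breakdown_eq by blast
    then obtain t where t: "\<And>n. x n - scaleC (t n) b \<in> ?S" by metis
    have diff: "cmod (t n - t m) * d \<le> norm (x n - x m)" for m n
    proof -
      have "(x n - scaleC (t n) b) - (x m - scaleC (t m) b) \<in> ?S"
        using t[of n] t[of m] by (rule cv.subspace_diff[OF cv.subspace_span])
      then have "cmod (t n - t m) * d \<le> norm ((x n - scaleC (t n) b) - (x m - scaleC (t m) b) + scaleC (t n - t m) b)"
        by (rule ineq)
      also have "(x n - scaleC (t n) b) - (x m - scaleC (t m) b) + scaleC (t n - t m) b = x n - x m"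
        by (simp add: cv.scale_left_diff_distrib)
      finally show ?thesis .
    qed
    have "Cauchy x" using xl by (rule LIMSEQ_imp_Cauchy)
    have "Cauchy t"
    proof (rule metric_CauchyI)
      fix e :: real assume "e > 0"
      then have "e * d > 0" using dpos by simp
      then obtain M where M: "\<And>m n. m \<ge> M \<Longrightarrow> n \<ge> M \<Longrightarrow> dist (x m) (x n) < e * d"
        using \<open>Cauchy x\<close> metric_CauchyD by blast
      show "\<exists>M. \<forall>m\<ge>M. \<forall>n\<ge>M. dist (t m) (t n) < e"
      proof (intro exI allI impI)
        fix m n assume "m \<ge> M" "n \<ge> M"
        then have "cmod (t m - t n) * d < e * d" using diff[of n m] diff[of m n] M[of m n] by (simp add: dist_norm)
        then show "dist (t m) (t n) < e" using dpos by (simp add: dist_norm)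
      qed
    qed
    then obtain \<tau> where tt: "t \<longlonglongrightarrow> \<tau>" using Cauchy_convergent_iff convergent_def by blast
    have "(\<lambda>n. scaleC (t n) b) \<longlonglongrightarrow> scaleC \<tau> b"
      using bounded_linear.tendsto[OF bl_scaleC_left tt] .
    then have "(\<lambda>n. x n - scaleC (t n) b) \<longlonglongrightarrow> l - scaleC \<tau> b"
      using xl by (intro tendsto_diff)
    then have "l - scaleC \<tau> b \<in> ?S"
      by (rule closed_sequentially[OF cl t])
    then show "l \<in> cv.span (insert b C)" using cv.span_breakdown_eq by blast
  qed
qed

lemma closed_span_finite:
  fixes C :: "'a::{complex_normed_space,banach} set"
  assumes "finite C" shows "closed (cv.span C)"
  using assms
proof (induction C rule: finite_induct)
  case empty then show ?case by simp
next
  case (insert b C)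
  show ?case
  proof (cases "b \<in> cv.span C")
    case True then have "cv.span (insert b C) = cv.span C" by (rule cv.span_redundant)
    then show ?thesis using insert by simp
  next
    case False then show ?thesis using closed_span_insert insert by blast
  qed
qed

lemma dim_sub_eq:
  fixes A :: "'a::complex_normed_space set"
  assumes "cv.subspace A" "A \<subseteq> V" "V \<subseteq> cv.span W" "finite W" "cv.dim V \<le> cv.dim A"
  shows "V \<subseteq> A"
proof -
  obtain BA where BA: "BA \<subseteq> A" "cv.independent BA" "A \<subseteq> cv.span BA" "card BA = cv.dim A"
    by (rule cv.basis_exists)
  have "BA \<subseteq> V" using BA(1) assms(2) by blast
  then obtain BB where BB: "BA \<subseteq> BB" "BB \<subseteq> V" "cv.independent BB" "V \<subseteq> cv.span BB"
    using cv.maximal_independent_subset_extend BA(2) by metis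
  have fBB: "finite BB" using cv.independent_span_bound[OF assms(4) BB(3)] BB(2) assms(3) by blast
  have "card BB = cv.dim V" using cv.basis_card_eq_dim[OF BB(2) BB(4) BB(3)] .
  moreover have "card BA \<le> card BB" using card_mono[OF fBB BB(1)] .
  ultimately have "card BA = card BB" using BA(4) assms(5) by linarith
  then have "BA = BB" using card_subset_eq[OF fBB BB(1)] by blast
  then have "V \<subseteq> cv.span BA" using BB(4) by blast
  also have "\<dots> \<subseteq> A" using cv.span_minimal[OF BA(1) assms(1)] .
  finally show ?thesis .
qed

lemma step:
  fixes \<E> :: "'a::{complex_normed_space,banach} set set" and \<Phi> :: "'a set \<Rightarrow> 'a set" and T :: "'a \<Rightarrow> 'a"
  assumes nest: "nest \<E>" and sf: "support_function \<E> \<Phi>" and TM: "T \<in> Mset \<E> \<Phi>"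
    and rk: "has_rank T (Suc m)"
  shows "\<exists>R0. R0 \<in> Mset \<E> \<Phi> \<and> has_rank R0 1 \<and> (\<lambda>x. T x - R0 x) \<in> Mset \<E> \<Phi> \<and> has_rank (\<lambda>x. T x - R0 x) m"
proof -
  from rk obtain B where B: "finite B" "card B = Suc m" "cv.independent B" "cv.span B = range T"
    unfolding has_rank_def cspan_eq cdep_eq by blast
  let ?Y = "range T"
  from TM have Tadd: "\<And>x y. T (x+y) = T x + T y" and Tsc: "\<And>c x. T (scaleC c x) = scaleC c (T x)"
    and K: "\<exists>K. \<forall>x. norm (T x) \<le> K * norm x" and TE: "\<And>E. E\<in>\<E> \<Longrightarrow> T ` E \<subseteq> \<Phi> E"
    unfolding Mset_def bounded_clinear_op_def by auto
  have subE: "\<And>E. E \<in> \<E> \<Longrightarrow> cv.subspace E"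
    using nest unfolding nest_def closed_csubspace_def csubspace_eq by blast
  have PhiE: "\<And>E. E \<in> \<E> \<Longrightarrow> \<Phi> E \<in> \<E>" using sf unfolding support_function_def by blast
  have Phimono: "\<And>E F. E\<in>\<E> \<Longrightarrow> F\<in>\<E> \<Longrightarrow> E \<subseteq> F \<Longrightarrow> \<Phi> E \<subseteq> \<Phi> F"
    using sf unfolding support_function_def by blast
  have chain: "\<And>E F. E\<in>\<E> \<Longrightarrow> F\<in>\<E> \<Longrightarrow> E \<subseteq> F \<or> F \<subseteq> E" using nest unfolding nest_def by blast
  have UNIVE: "UNIV \<in> \<E>" using nest nest_def by blast
  have Ysub: "cv.subspace ?Y" using B(4) cv.subspace_span by metis
  obtain b where "b \<in> B" using B(2) by (metis card.empty ex_in_conv nat.distinct(1))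
  then have "b \<noteq> 0" using B(3) cv.dependent_zero by blast
  then have T0: "\<exists>x. T x \<noteq> 0" using \<open>b\<in>B\<close> B(4) cv.span_superset by force
  define S where "S = {E\<in>\<E>. \<exists>x\<in>E. T x \<noteq> 0}"
  have "UNIV \<in> S" using UNIVE T0 S_def by auto
  then obtain E1 where E1: "E1 \<in> S" and E1min: "\<And>E. E \<in> S \<Longrightarrow> cv.dim (\<Phi> E1 \<inter> ?Y) \<le> cv.dim (\<Phi> E \<inter> ?Y)"
    using ex_has_least_nat[of "\<lambda>E. E \<in> S" UNIV "\<lambda>E. cv.dim (\<Phi> E \<inter> ?Y)"] by blast
  then obtain x0 where x0: "x0 \<in> E1" "T x0 \<noteq> 0" and E1E: "E1 \<in> \<E>" unfolding S_def by blast
  define y where "y = T x0"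
  have yPhi: "y \<in> \<Phi> E1" using TE[OF E1E] x0 y_def by blast
  have yall: "y \<in> \<Phi> E" if "E \<in> S" for E
  proof -
    have EE: "E \<in> \<E>" using that S_def by blast
    show ?thesis
    proof (cases "E1 \<subseteq> E")
      case True then show ?thesis using Phimono[OF E1E EE] yPhi by blast
    next
      case False then have "E \<subseteq> E1" using chain[OF EE E1E] by blast
      then have sub: "\<Phi> E \<inter> ?Y \<subseteq> \<Phi> E1 \<inter> ?Y" using Phimono[OF EE E1E] by blast
      have "\<Phi> E1 \<inter> ?Y \<subseteq> \<Phi> E \<inter> ?Y"
      proof (rule dim_sub_eq)
        show "cv.subspace (\<Phi> E \<inter> ?Y)" using subE[OF PhiE[OF EE]] Ysub cv.subspace_inter by blast
        show "\<Phi> E \<inter> ?Y \<subseteq> \<Phi> E1 \<inter> ?Y" by (rule sub)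
        show "\<Phi> E1 \<inter> ?Y \<subseteq> cv.span B" using B(4) by blast
        show "finite B" by (rule B(1))
        show "cv.dim (\<Phi> E1 \<inter> ?Y) \<le> cv.dim (\<Phi> E \<inter> ?Y)" by (rule E1min[OF that])
      qed
      then show ?thesis using yPhi y_def by blast
    qed
  qed
  have yY: "y \<in> ?Y" using y_def by blast
  have yne: "y \<noteq> 0" using x0 y_def by simp
  have indy: "cv.independent {y}" using yne cv.independent_insert by simp
  obtain B' where B': "{y} \<subseteq> B'" "B' \<subseteq> ?Y" "cv.independent B'" "?Y \<subseteq> cv.span B'"
    using cv.maximal_independent_subset_extend[of "{y}" ?Y] indy yY by blast
  have fB': "finite B'" using cv.independent_span_bound[OF B(1) B'(3)] B'(2) B(4) by blast
  have "card B' = cv.dim ?Y" using cv.basis_card_eq_dim[OF B'(2) B'(4) B'(3)] .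
  also have "cv.dim ?Y = card B" using cv.dim_span_eq_card_independent[OF B(3)] B(4) by simp
  finally have cB': "card B' = Suc m" using B(2) by simp
  have spB': "cv.span B' = ?Y" using cv.span_subspace[OF B'(2) B'(4) Ysub] .
  define C where "C = B' - {y}"
  have fC: "finite C" using fB' C_def by simp
  have cC: "card C = m" using cB' C_def B'(1) fB' by simp
  have indC: "cv.independent C" using cv.independent_mono[OF B'(3)] C_def by blast
  have insC: "insert y C = B'" using C_def B'(1) by blast
  have yC: "y \<notin> C" using C_def by blast
  have ynH: "y \<notin> cv.span C" using B'(3) yC cv.independent_insert[of y C] insC by simp
  define H where "H = cv.span C"
  have Hsub: "cv.subspace H" using H_def cv.subspace_span by blast
  have HY: "H \<subseteq> ?Y" using H_def spB' cv.span_mono[of C B'] C_def by blast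
  have clH: "closed H" using closed_span_finite[OF fC] H_def by simp
  define d where "d = infdist y H"
  have dpos: "d > 0" unfolding d_def using infdist_pos_not_in_closed[OF clH] ynH H_def
    cv.span_zero[of C] by auto
  have coefex: "\<exists>c. z - scaleC c y \<in> H" if "z \<in> ?Y" for z
    using that spB' insC cv.span_breakdown_eq[of z y C] H_def by simp
  have uniq: "c1 = c2" if "z - scaleC c1 y \<in> H" "z - scaleC c2 y \<in> H" for z c1 c2
  proof (rule ccontr)
    assume ne: "c1 \<noteq> c2"
    have "(z - scaleC c2 y) - (z - scaleC c1 y) \<in> H" using cv.subspace_diff[OF Hsub that(2) that(1)] .
    then have "scaleC (c1 - c2) y \<in> H" by (simp add: cv.scale_left_diff_distrib)
    then have "scaleC (inverse (c1 - c2)) (scaleC (c1 - c2) y) \<in> H" using cv.subspace_scale[OF Hsub] by blast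
    then have "y \<in> H" using ne by (simp add: scaleC_scaleC scaleC_one)
    then show False using ynH H_def by blast
  qed
  define coef where "coef z = (SOME c. z - scaleC c y \<in> H)" for z
  have coefP: "z - scaleC (coef z) y \<in> H" if "z \<in> ?Y" for z
    unfolding coef_def using someI_ex[OF coefex[OF that]] .
  have coef_eq: "coef z = c" if "z \<in> ?Y" "z - scaleC c y \<in> H" for z c
    using uniq[OF coefP[OF that(1)] that(2)] .
  have coef_add: "coef (z1 + z2) = coef z1 + coef z2" if "z1 \<in> ?Y" "z2 \<in> ?Y" for z1 z2
  proof (rule coef_eq)
    show "z1 + z2 \<in> ?Y" using cv.subspace_add[OF Ysub that] .
    have "(z1 - scaleC (coef z1) y) + (z2 - scaleC (coef z2) y) \<in> H"
      using cv.subspace_add[OF Hsub coefP[OF that(1)] coefP[OF that(2)]] .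
    then show "z1 + z2 - scaleC (coef z1 + coef z2) y \<in> H"
      by (simp add: scaleC_add_left algebra_simps)
  qed
  have coef_sc: "coef (scaleC a z) = a * coef z" if "z \<in> ?Y" for a z
  proof (rule coef_eq)
    show "scaleC a z \<in> ?Y" using cv.subspace_scale[OF Ysub that] .
    have "scaleC a (z - scaleC (coef z) y) \<in> H" using cv.subspace_scale[OF Hsub coefP[OF that]] .
    then show "scaleC a z - scaleC (a * coef z) y \<in> H"
      by (simp add: cv.scale_right_diff_distrib scaleC_scaleC)
  qed
  have coef_bound: "cmod (coef z) * d \<le> norm z" if "z \<in> ?Y" for z
    using key_ineq[OF Hsub coefP[OF that], of "coef z" y] d_def by simp
  have coef_H: "coef h = 0" if "h \<in> H" for h
    using coef_eq[of h 0] that HY by auto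
  have coef_y: "coef y = 1"
    using coef_eq[of y 1] yY cv.subspace_0[OF Hsub] by (simp add: scaleC_one)
  define R0 where "R0 x = scaleC (coef (T x)) y" for x
  from K obtain K where K: "\<And>x. norm (T x) \<le> K * norm x" by blast
  have R0add: "R0 (x1 + x2) = R0 x1 + R0 x2" for x1 x2
    unfolding R0_def Tadd by (simp add: coef_add scaleC_add_left)
  have R0sc: "R0 (scaleC c x) = scaleC c (R0 x)" for c x
    unfolding R0_def Tsc by (simp add: coef_sc scaleC_scaleC)
  have R0bd: "norm (R0 x) \<le> (K * norm y / d) * norm x" for x
  proof -
    have "cmod (coef (T x)) * d \<le> K * norm x" using coef_bound[of "T x"] K[of x] by simp
    then have "cmod (coef (T x)) \<le> K * norm x / d" using dpos by (simp add: le_divide_eq)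
    then have "cmod (coef (T x)) * norm y \<le> (K * norm x / d) * norm y" by (rule mult_right_mono) simp
    then show ?thesis unfolding R0_def by (simp add: norm_scaleC mult_ac)
  qed
  have R0E: "R0 ` E \<subseteq> \<Phi> E" if "E \<in> \<E>" for E
  proof
    fix z assume "z \<in> R0 ` E"
    then obtain x where x: "x \<in> E" "z = R0 x" by blast
    have sP: "cv.subspace (\<Phi> E)" using subE[OF PhiE[OF that]] .
    show "z \<in> \<Phi> E"
    proof (cases "E \<in> S")
      case True then show ?thesis using x yall cv.subspace_scale[OF sP] R0_def by auto
    next
      case False then have "T x = 0" using x that S_def by blast
      then have "R0 x = 0" unfolding R0_def using coef_H cv.subspace_0[OF Hsub] by simp
      then show ?thesis using x cv.subspace_0[OF sP] by simp
    qed
  qed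
  have R0M: "R0 \<in> Mset \<E> \<Phi>"
    unfolding Mset_def bounded_clinear_op_def using R0add R0sc R0bd R0E by blast
  define T' where "T' x = T x - R0 x" for x
  have T'bd: "norm (T' x) \<le> (K + K * norm y / d) * norm x" for x
  proof -
    have "norm (T' x) \<le> norm (T x) + norm (R0 x)" unfolding T'_def by (rule norm_triangle_ineq4)
    also have "\<dots> \<le> K * norm x + (K * norm y / d) * norm x" using K[of x] R0bd[of x] by linarith
    finally show ?thesis by (simp add: algebra_simps)
  qed
  have T'M: "T' \<in> Mset \<E> \<Phi>"
    unfolding Mset_def bounded_clinear_op_def
  proof (intro CollectI conjI allI ballI)
    show "T' (x + y) = T' x + T' y" for x y unfolding T'_def Tadd R0add by simp
    show "T' (scaleC c x) = scaleC c (T' x)" for c x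
      unfolding T'_def Tsc R0sc by (simp add: cv.scale_right_diff_distrib)
    show "\<exists>K. \<forall>x. norm (T' x) \<le> K * norm x" using T'bd by blast
    fix E assume EE: "E \<in> \<E>"
    show "T' ` E \<subseteq> \<Phi> E"
    proof
      fix z assume "z \<in> T' ` E"
      then obtain x where x: "x \<in> E" "z = T' x" by blast
      have "T x \<in> \<Phi> E" "R0 x \<in> \<Phi> E" using TE[OF EE] R0E[OF EE] x by auto
      then show "z \<in> \<Phi> E" using cv.subspace_diff[OF subE[OF PhiE[OF EE]]] x T'_def by simp
    qed
  qed
  have rR0: "has_rank R0 1"
    unfolding has_rank_def cspan_eq cdep_eq
  proof (intro exI conjI)
    show "finite {y}" "card {y} = 1" "cv.independent {y}" using indy by auto
    show "cv.span {y} = range R0"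
    proof
      show "range R0 \<subseteq> cv.span {y}" unfolding R0_def cv.span_singleton by blast
      show "cv.span {y} \<subseteq> range R0" unfolding cv.span_singleton
      proof
        fix z assume "z \<in> range (\<lambda>k. scaleC k y)"
        then obtain k where k: "z = scaleC k y" by blast
        have "R0 (scaleC k x0) = scaleC k y"
          unfolding R0_def Tsc y_def[symmetric] using coef_sc[OF yY] coef_y by simp
        then show "z \<in> range R0" using k by (metis rangeI)
      qed
    qed
  qed
  have rT': "has_rank T' m"
    unfolding has_rank_def cspan_eq cdep_eq
  proof (intro exI conjI)
    show "finite C" "card C = m" "cv.independent C" using fC cC indC by auto
    show "cv.span C = range T'"
    proof
      show "range T' \<subseteq> cv.span C" unfolding T'_def R0_def H_def[symmetric] using coefP by blast
      show "cv.span C \<subseteq> range T'"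
      proof
        fix h assume "h \<in> cv.span C"
        then have hH: "h \<in> H" using H_def by simp
        then obtain x where x: "h = T x" using HY by blast
        have "T' x = h" unfolding T'_def R0_def using x coef_H[OF hH] by simp
        then show "h \<in> range T'" by (metis rangeI)
      qed
    qed
  qed
  show ?thesis using R0M rR0 T'M rT' unfolding T'_def by blast
qed

theorem mainTheorem7:
  fixes \<E> :: "'a::{complex_normed_space, banach} set set"
    and \<Phi> :: "'a set \<Rightarrow> 'a set"
    and T :: "'a \<Rightarrow> 'a"
    and n :: nat
  assumes "nest \<E>"
    and "support_function \<E> \<Phi>"
    and "T \<in> Mset \<E> \<Phi>"
    and "has_rank T n"
  shows "\<exists>R :: nat \<Rightarrow> 'a \<Rightarrow> 'a.
           (\<forall>i<n. R i \<in> Mset \<E> \<Phi> \<and> has_rank (R i) 1) \<and>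
           T = (\<lambda>x. \<Sum>i<n. R i x)"
  using assms(3,4)
proof (induction n arbitrary: T)
  case 0
  then obtain B where "finite B" "card B = 0" "cspan B = range T" unfolding has_rank_def by blast
  then have "range T = {0}" by (simp add: cspan_eq)
  then have "T = (\<lambda>x. 0)" by (metis UNIV_I image_eqI singletonD ext)
  then show ?case by simp
next
  case (Suc m)
  obtain R0 where R0: "R0 \<in> Mset \<E> \<Phi>" "has_rank R0 1" "(\<lambda>x. T x - R0 x) \<in> Mset \<E> \<Phi>"
    "has_rank (\<lambda>x. T x - R0 x) m"
    using step[OF assms(1,2) Suc.prems] by blast
  obtain R where R: "\<forall>i<m. R i \<in> Mset \<E> \<Phi> \<and> has_rank (R i) 1" "(\<lambda>x. T x - R0 x) = (\<lambda>x. \<Sum>i<m. R i x)"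
    using Suc.IH[OF R0(3,4)] by blast
  define R' where "R' = R(m := R0)"
  have "\<forall>i<Suc m. R' i \<in> Mset \<E> \<Phi> \<and> has_rank (R' i) 1"
    using R(1) R0(1,2) R'_def less_Suc_eq by auto
  moreover have "T = (\<lambda>x. \<Sum>i<Suc m. R' i x)"
  proof
    fix x
    have "(\<Sum>i<Suc m. R' i x) = (\<Sum>i<m. R i x) + R0 x" using R'_def by simp
    also have "\<dots> = T x" using fun_cong[OF R(2), of x] by (metis diff_add_cancel)
    finally show "T x = (\<Sum>i<Suc m. R' i x)" by simp
  qed
  ultimately show ?case by blast
qed

end
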